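(* Let $T>0$, $\mu,\theta>0$, $x_0\in\mathbb R$, $H\in(0,1)$, and let $X$ be the solution of $X_t=x_0-\mu\int_0^tX_s\,ds+\theta B^H_t$, $t\le T$, where $B^H$ is a fractional Brownian motion with Hurst index $H$. Then $\sup_{t\le T}\mathbb{E}X_t^2\le2x_0^2+4\theta^2e^{2\mu T}T^{2H}(1+\mu^2T^2)$, $\sigma_X^2(0,h)\le Ch^{2H}$ for some constant $C$ and all small $h$ (so (C1) holds with $\gamma=H$), and (C2) holds with $\gamma=H$ and $\kappa=\theta$.
   Context: The solution is $X_t=x_0e^{-\mu t}+\theta\int_0^te^{-\mu(t-u)}dB^H_u$ with the integral a pathwise Riemann–Stieltjes integral. $\sigma_X^2(s,t)=\mathbb{E}[X(t)-X(s)]^2$. $\Psi$: continuous $\varphi\colon(0,T]\to[0,\infty)$ with $\varphi(h)\to0$, $L(h):=\varphi(h)/h\to\infty$, $hL(h)^3\to0$ as $h\downarrow0$. (C1): $\sigma_X(0,\delta)=O(\delta^\gamma)$ as $\delta\downarrow0$. (C2): for every $\varphi\in\Psi$, $\sup_{\varphi(\delta)\le t\le T-\delta}\sup_{0<h\le\delta}|\sigma_X(t,t+h)/(\kappa h^\gamma)-1|\to0$ as $\delta\downarrow0$. *)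

theory Defs
  imports "HOL-Probability.Probability" "HOL-Library.Landau_Symbols"
begin

definition fbm_cov :: "real \<Rightarrow> real \<Rightarrow> real \<Rightarrow> real" where
  "fbm_cov H s t = (\<bar>s\<bar> powr (2*H) + \<bar>t\<bar> powr (2*H) - \<bar>t - s\<bar> powr (2*H)) / 2"

text \<open>B is a fractional Brownian motion with Hurst index H on the time set [0,T]
  (restriction of an fBm to [0,T]): a centered Gaussian process with covariance fbm_cov H,
  given through the laws of all finite linear combinations (Cramer--Wold), and with
  continuous sample paths.\<close>
definition is_fBm :: "'a measure \<Rightarrow> real \<Rightarrow> real \<Rightarrow> (real \<Rightarrow> 'a \<Rightarrow> real) \<Rightarrow> bool" where
  "is_fBm M H T B \<longleftrightarrow>
     (\<forall>t\<in>{0..T}. B t \<in> borel_measurable M) \<and>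
     (\<forall>\<omega>\<in>space M. continuous_on {0..T} (\<lambda>t. B t \<omega>)) \<and>
     (\<forall>(I::nat set) (ts::nat \<Rightarrow> real) (c::nat \<Rightarrow> real).
        finite I \<longrightarrow> (\<forall>i\<in>I. ts i \<in> {0..T}) \<longrightarrow>
        (let v = (\<Sum>i\<in>I. \<Sum>j\<in>I. c i * c j * fbm_cov H (ts i) (ts j));
             Y = (\<lambda>\<omega>. \<Sum>i\<in>I. c i * B (ts i) \<omega>)
         in (v = 0 \<longrightarrow> (AE \<omega> in M. Y \<omega> = 0)) \<and>
            (v > 0 \<longrightarrow> distributed M lborel Y (\<lambda>x. ennreal (normal_density 0 (sqrt v) x)))))"

definition sigma2 :: "'a measure \<Rightarrow> (real \<Rightarrow> 'a \<Rightarrow> real) \<Rightarrow> real \<Rightarrow> real \<Rightarrow> real" where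
  "sigma2 M X s t = integral\<^sup>L M (\<lambda>\<omega>. (X t \<omega> - X s \<omega>)^2)"

definition sigmaX :: "'a measure \<Rightarrow> (real \<Rightarrow> 'a \<Rightarrow> real) \<Rightarrow> real \<Rightarrow> real \<Rightarrow> real" where
  "sigmaX M X s t = sqrt (sigma2 M X s t)"

definition Psi :: "real \<Rightarrow> (real \<Rightarrow> real) set" where
  "Psi T = {\<phi>. continuous_on {0<..T} \<phi> \<and> (\<forall>h\<in>{0<..T}. \<phi> h \<ge> 0) \<and>
     (\<phi> \<longlongrightarrow> 0) (at_right 0) \<and>
     filterlim (\<lambda>h. \<phi> h / h) at_top (at_right 0) \<and>
     ((\<lambda>h. h * (\<phi> h / h)^3) \<longlongrightarrow> 0) (at_right 0)}"

definition cond_C1 :: "'a measure \<Rightarrow> (real \<Rightarrow> 'a \<Rightarrow> real) \<Rightarrow> real \<Rightarrow> bool" where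
  "cond_C1 M X \<gamma> \<longleftrightarrow> (\<lambda>\<delta>. sigmaX M X 0 \<delta>) \<in> O[at_right 0](\<lambda>\<delta>. \<delta> powr \<gamma>)"

text \<open>Condition (C2) with exponent gamma and constant kappa; "sup ... tends to 0 as delta
  decreases to 0" is written out with epsilon.\<close>
definition cond_C2 :: "'a measure \<Rightarrow> (real \<Rightarrow> 'a \<Rightarrow> real) \<Rightarrow> real \<Rightarrow> real \<Rightarrow> real \<Rightarrow> bool" where
  "cond_C2 M X T \<gamma> \<kappa> \<longleftrightarrow> (\<forall>\<phi>\<in>Psi T. \<forall>\<epsilon>>0. eventually (\<lambda>\<delta>.
      \<forall>t h. \<phi> \<delta> \<le> t \<and> t \<le> T - \<delta> \<and> 0 < h \<and> h \<le> \<delta> \<longrightarrow>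
        \<bar>sigmaX M X t (t + h) / (\<kappa> * h powr \<gamma>) - 1\<bar> \<le> \<epsilon>) (at_right 0))"

end

theory Submission
  imports Defs
begin

lemma normal_second_moment:
  assumes M: "prob_space M" and s: "0 < s"
    and D: "distributed M lborel Y (\<lambda>x. ennreal (normal_density 0 s x))"
  shows "integrable M (\<lambda>\<omega>. (Y \<omega>)^2) \<and> integral\<^sup>L M (\<lambda>\<omega>. (Y \<omega>)^2) = s^2"
proof
  have i: "integrable lborel (\<lambda>x. normal_density 0 s x * (x - 0)^2)"
    by (rule integrable_normal_moment[OF s])
  show "integrable M (\<lambda>\<omega>. (Y \<omega>)^2)"
    using distributed_integrable[OF D, of "\<lambda>x. x^2"] i by simp
  have "integral\<^sup>L lborel (\<lambda>x. normal_density 0 s x * (x - 0)^(2*1)) = fact (2 * 1) / ((2 / s\<^sup>2)^1 * fact 1)"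
    using integral_normal_moment_even[OF s] by blast
  also have "\<dots> = s^2" using s by (simp add: field_simps)
  finally have e: "integral\<^sup>L lborel (\<lambda>x. normal_density 0 s x * x^2) = s^2" by simp
  show "integral\<^sup>L M (\<lambda>\<omega>. (Y \<omega>)^2) = s^2"
    using distributed_integral[OF D, of "\<lambda>x. x^2"] e by simp
qed

lemma fBm_comb_moment:
  fixes I :: "nat set" and ts c :: "nat \<Rightarrow> real"
  assumes M: "prob_space M" and B: "is_fBm M H T B"
    and I: "finite I" and ts: "\<forall>i\<in>I. ts i \<in> {0..T}"
    and v: "v = (\<Sum>i\<in>I. \<Sum>j\<in>I. c i * c j * fbm_cov H (ts i) (ts j))" and v0: "v \<ge> 0"
  shows "integrable M (\<lambda>\<omega>. (\<Sum>i\<in>I. c i * B (ts i) \<omega>)^2) \<and>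
         integral\<^sup>L M (\<lambda>\<omega>. (\<Sum>i\<in>I. c i * B (ts i) \<omega>)^2) = v"
proof -
  have meas: "\<forall>t\<in>{0..T}. B t \<in> borel_measurable M" using B unfolding is_fBm_def by blast
  have Ym: "(\<lambda>\<omega>. (\<Sum>i\<in>I. c i * B (ts i) \<omega>)^2) \<in> borel_measurable M"
    using meas ts by (intro borel_measurable_power borel_measurable_sum borel_measurable_times) auto
  have H: "(v = 0 \<longrightarrow> (AE \<omega> in M. (\<Sum>i\<in>I. c i * B (ts i) \<omega>) = 0)) \<and>
            (v > 0 \<longrightarrow> distributed M lborel (\<lambda>\<omega>. \<Sum>i\<in>I. c i * B (ts i) \<omega>) (\<lambda>x. ennreal (normal_density 0 (sqrt v) x)))"
  proof -
    have all: "\<forall>(I::nat set) (ts::nat \<Rightarrow> real) (c::nat \<Rightarrow> real).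
        finite I \<longrightarrow> (\<forall>i\<in>I. ts i \<in> {0..T}) \<longrightarrow>
        (let v = (\<Sum>i\<in>I. \<Sum>j\<in>I. c i * c j * fbm_cov H (ts i) (ts j));
             Y = (\<lambda>\<omega>. \<Sum>i\<in>I. c i * B (ts i) \<omega>)
         in (v = 0 \<longrightarrow> (AE \<omega> in M. Y \<omega> = 0)) \<and>
            (v > 0 \<longrightarrow> distributed M lborel Y (\<lambda>x. ennreal (normal_density 0 (sqrt v) x))))"
      using B[unfolded is_fBm_def] by (rule conjunct2[OF conjunct2])
    have ts': "\<And>i. i \<in> I \<Longrightarrow> ts i \<in> {0..T}" using ts by blast
    from all[rule_format, of I ts c, OF I ts'] show ?thesis unfolding v by (simp add: Let_def)
  qed
  show ?thesis
  proof (cases "v = 0")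
    case True
    then have ae: "AE \<omega> in M. (\<Sum>i\<in>I. c i * B (ts i) \<omega>)^2 = 0" using H by auto
    have "integrable M (\<lambda>\<omega>. (\<Sum>i\<in>I. c i * B (ts i) \<omega>)^2)"
      using integrable_cong_AE[OF Ym _ ae] by simp
    moreover have "integral\<^sup>L M (\<lambda>\<omega>. (\<Sum>i\<in>I. c i * B (ts i) \<omega>)^2) = 0"
      using integral_cong_AE[OF Ym _ ae] by simp
    ultimately show ?thesis using True by simp
  next
    case False
    then have "v > 0" using v0 by simp
    then have D: "distributed M lborel (\<lambda>\<omega>. \<Sum>i\<in>I. c i * B (ts i) \<omega>) (\<lambda>x. ennreal (normal_density 0 (sqrt v) x))"
      using H by auto
    show ?thesis using normal_second_moment[OF M _ D] \<open>v > 0\<close> by simp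
  qed
qed

lemma fBm_moment:
  assumes M: "prob_space M" and B: "is_fBm M H T B" and t: "t \<in> {0..T}" and H: "0 < H"
  shows "integrable M (\<lambda>\<omega>. (B t \<omega>)^2) \<and> integral\<^sup>L M (\<lambda>\<omega>. (B t \<omega>)^2) = t powr (2*H)"
proof -
  have v: "(\<Sum>i\<in>{0::nat}. \<Sum>j\<in>{0::nat}. (\<lambda>_. 1::real) i * (\<lambda>_. 1) j * fbm_cov H ((\<lambda>_. t) i) ((\<lambda>_. t) j)) = t powr (2*H)"
    using t H by (simp add: fbm_cov_def)
  have "0 \<le> t powr (2*H)" by simp
  from fBm_comb_moment[OF M B _ _ v[symmetric] this] t show ?thesis by simp
qed

lemma fBm_incr_moment:
  assumes M: "prob_space M" and B: "is_fBm M H T B" and t: "t \<in> {0..T}" and s: "s \<in> {0..T}" and H: "0 < H"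
  shows "integrable M (\<lambda>\<omega>. (B t \<omega> - B s \<omega>)^2) \<and> integral\<^sup>L M (\<lambda>\<omega>. (B t \<omega> - B s \<omega>)^2) = \<bar>t - s\<bar> powr (2*H)"
proof -
  let ?ts = "\<lambda>i::nat. if i = 0 then t else s"
  let ?c = "\<lambda>i::nat. if i = 0 then (1::real) else -1"
  have v: "(\<Sum>i\<in>{0::nat,1}. \<Sum>j\<in>{0::nat,1}. ?c i * ?c j * fbm_cov H (?ts i) (?ts j)) = \<bar>t - s\<bar> powr (2*H)"
    using t s H by (simp add: fbm_cov_def abs_minus_commute field_simps)
  have "0 \<le> \<bar>t - s\<bar> powr (2*H)" by simp
  from fBm_comb_moment[OF M B _ _ v[symmetric] this] t s
  have "integrable M (\<lambda>\<omega>. (\<Sum>i\<in>{0::nat,1}. ?c i * B (?ts i) \<omega>)^2) \<and>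
         integral\<^sup>L M (\<lambda>\<omega>. (\<Sum>i\<in>{0::nat,1}. ?c i * B (?ts i) \<omega>)^2) = \<bar>t - s\<bar> powr (2*H)" by simp
  then show ?thesis by simp
qed



lemma integral_partition:
  fixes f :: "real \<Rightarrow> real"
  assumes "h \<ge> 0" "continuous_on {a..a + real N * h} f"
  shows "integral {a..a + real N * h} f = (\<Sum>k<N. integral {a + real k * h..a + real (Suc k) * h} f)"
  using assms
proof (induction N)
  case 0
  then show ?case by simp
next
  case (Suc N)
  have le: "a + real N * h \<le> a + real (Suc N) * h" using Suc.prems by (simp add: algebra_simps)
  have le0: "a \<le> a + real N * h" using Suc.prems by simp
  have c: "continuous_on {a..a + real N * h} f"
    using Suc.prems(2) by (rule continuous_on_subset) (use le in auto)
  have "integral {a..a + real (Suc N)*h} f = integral {a..a + real N * h} f + integral {a + real N * h..a + real (Suc N) * h} f"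
    by (rule Henstock_Kurzweil_Integration.integral_combine[symmetric, OF le0 le]) (use Suc.prems in \<open>auto intro: integrable_continuous_interval\<close>)
  then show ?case using Suc.IH[OF Suc.prems(1) c] by simp
qed

lemma riemann_sum_tendsto:
  fixes f :: "real \<Rightarrow> real"
  assumes ab: "a \<le> b" and f: "continuous_on {a..b} f"
  shows "(\<lambda>n. (b-a)/real (Suc n) * (\<Sum>k<Suc n. f (a + real k * ((b-a)/real (Suc n))))) \<longlonglongrightarrow> integral {a..b} f"
proof (rule LIMSEQ_I)
  fix \<epsilon> :: real assume e: "\<epsilon> > 0"
  define e' where "e' = \<epsilon> / (b - a + 1)"
  have e'pos: "e' > 0" using e ab by (simp add: e'_def)
  have uc: "uniformly_continuous_on {a..b} f" by (rule compact_uniformly_continuous[OF f compact_Icc])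
  then obtain d where d: "d > 0" and dd: "\<And>x y. x \<in> {a..b} \<Longrightarrow> y \<in> {a..b} \<Longrightarrow> dist y x < d \<Longrightarrow> dist (f y) (f x) < e'"
    unfolding uniformly_continuous_on_def using e'pos by metis
  obtain N0 :: nat where N0: "(b - a) / d < real N0" using reals_Archimedean2 by blast
  show "\<exists>no. \<forall>n\<ge>no. norm ((b-a)/real (Suc n) * (\<Sum>k<Suc n. f (a + real k * ((b-a)/real (Suc n))))
          - integral {a..b} f) < \<epsilon>"
  proof (intro exI allI impI)
    fix n assume n: "N0 \<le> n"
    define h where "h = (b - a) / real (Suc n)"
    have h0: "h \<ge> 0" using ab by (simp add: h_def)
    have hd: "h < d"
    proof -
      have "(b - a) < d * real (Suc n)" using N0 n d
        by (smt (verit, ccfv_SIG) divide_less_eq mult.commute of_nat_Suc of_nat_mono)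
      then show ?thesis unfolding h_def by (simp add: divide_less_eq mult.commute)
    qed
    have bN: "a + real (Suc n) * h = b" unfolding h_def by simp
    have sub: "{a + real k * h..a + real (Suc k) * h} \<subseteq> {a..b}" if "k < Suc n" for k
    proof -
      have "real (Suc k) * h \<le> real (Suc n) * h" using that h0 by (intro mult_right_mono) auto
      then show ?thesis using bN h0 by auto
    qed
    have I: "integral {a..b} f = (\<Sum>k<Suc n. integral {a + real k * h..a + real (Suc k) * h} f)"
      using integral_partition[of h a "Suc n" f] h0 f bN by simp
    have S: "(b-a)/real (Suc n) * (\<Sum>k<Suc n. f (a + real k * ((b-a)/real (Suc n))))
           = (\<Sum>k<Suc n. h * f (a + real k * h))"
      unfolding h_def by (rule sum_distrib_left)
    have Dk: "norm (h * f (a + real k * h) - integral {a + real k * h..a + real (Suc k) * h} f) \<le> e' * h"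
      if k: "k < Suc n" for k
    proof -
      let ?x = "a + real k * h" and ?y = "a + real (Suc k) * h"
      have xy: "?x \<le> ?y" using h0 by (simp add: algebra_simps)
      have cf: "continuous_on {?x..?y} f" using f sub[OF k] by (rule continuous_on_subset)
      have "integral {?x..?y} (\<lambda>s. f s - f ?x) = integral {?x..?y} f - integral {?x..?y} (\<lambda>s. f ?x)"
        by (rule Henstock_Kurzweil_Integration.integral_diff) (use cf in \<open>auto intro: integrable_continuous_interval\<close>)
      also have "integral {?x..?y} (\<lambda>s. f ?x) = h * f ?x" using xy by (simp add: algebra_simps)
      finally have eq: "integral {?x..?y} (\<lambda>s. f s - f ?x) = integral {?x..?y} f - h * f ?x" .
      have "norm (integral {?x..?y} (\<lambda>s. f s - f ?x)) \<le> e' * (?y - ?x)"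
      proof (rule integral_bound[OF xy])
        show "continuous_on {?x..?y} (\<lambda>s. f s - f ?x)" using cf by (intro continuous_intros)
        fix s assume s: "s \<in> {?x..?y}"
        have "?x \<in> {a..b}" "s \<in> {a..b}" using sub[OF k] s xy by auto
        moreover have "dist s ?x < d" using s hd by (auto simp: dist_real_def algebra_simps)
        ultimately have "dist (f s) (f ?x) < e'" by (rule dd)
        then show "norm (f s - f ?x) \<le> e'" by (simp add: dist_real_def)
      qed
      also have "?y - ?x = h" by (simp add: algebra_simps)
      finally show ?thesis using eq by (simp add: norm_minus_commute)
    qed
    have "norm ((\<Sum>k<Suc n. h * f (a + real k * h)) - integral {a..b} f)
        = norm (\<Sum>k<Suc n. (h * f (a + real k * h) - integral {a + real k * h..a + real (Suc k) * h} f))"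
      unfolding I by (simp add: sum_subtractf)
    also have "\<dots> \<le> (\<Sum>k<Suc n. norm (h * f (a + real k * h) - integral {a + real k * h..a + real (Suc k) * h} f))"
      by (rule norm_sum)
    also have "\<dots> \<le> (\<Sum>k<Suc n. e' * h)" by (rule sum_mono) (use Dk in auto)
    also have "\<dots> = e' * (b - a)" unfolding h_def by simp
    also have "\<dots> < \<epsilon>" unfolding e'_def using e ab by (simp add: field_simps)
    finally show "norm ((b-a)/real (Suc n) * (\<Sum>k<Suc n. f (a + real k * ((b-a)/real (Suc n))))
          - integral {a..b} f) < \<epsilon>" unfolding S .
  qed
qed


lemma process_integral_moment:
  fixes Y :: "real \<Rightarrow> 'a \<Rightarrow> real"
  assumes M: "prob_space M" and ab: "a \<le> b"
    and meas: "\<forall>t\<in>{a..b}. Y t \<in> borel_measurable M"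
    and cont: "\<forall>\<omega>\<in>space M. continuous_on {a..b} (\<lambda>t. Y t \<omega>)"
    and mom: "\<forall>t\<in>{a..b}. integrable M (\<lambda>\<omega>. (Y t \<omega>)^2) \<and> integral\<^sup>L M (\<lambda>\<omega>. (Y t \<omega>)^2) \<le> K"
  shows "(\<lambda>\<omega>. integral {a..b} (\<lambda>s. Y s \<omega>)) \<in> borel_measurable M \<and>
         integrable M (\<lambda>\<omega>. (integral {a..b} (\<lambda>s. Y s \<omega>))^2) \<and>
         integral\<^sup>L M (\<lambda>\<omega>. (integral {a..b} (\<lambda>s. Y s \<omega>))^2) \<le> (b-a)^2 * K"
proof -
  define h where "h n = (b - a) / real (Suc n)" for n
  define x where "x n k = a + real k * h n" for n k
  define S where "S n \<omega> = h n * (\<Sum>k<Suc n. Y (x n k) \<omega>)" for n \<omega>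
  define I where "I \<omega> = integral {a..b} (\<lambda>s. Y s \<omega>)" for \<omega>
  define G where "G n \<omega> = (h n)^2 * real (Suc n) * (\<Sum>k<Suc n. (Y (x n k) \<omega>)^2)" for n \<omega>
  have h0: "h n \<ge> 0" for n using ab by (simp add: h_def)
  have xin: "x n k \<in> {a..b}" if "k < Suc n" for n k
  proof -
    have "real k * h n \<le> real (Suc n) * h n" using that h0 by (intro mult_right_mono) auto
    also have "\<dots> = b - a" by (simp add: h_def)
    finally show ?thesis using h0 by (simp add: x_def)
  qed
  have K0: "K \<ge> 0"
  proof -
    have "a \<in> {a..b}" using ab by simp
    then have "integral\<^sup>L M (\<lambda>\<omega>. (Y a \<omega>)^2) \<le> K" using mom by blast
    moreover have "integral\<^sup>L M (\<lambda>\<omega>. (Y a \<omega>)^2) \<ge> 0" by simp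
    ultimately show ?thesis by linarith
  qed
  have Sm: "S n \<in> borel_measurable M" for n
    unfolding S_def using meas xin by (intro borel_measurable_times borel_measurable_sum) auto
  have lim: "(\<lambda>n. S n \<omega>) \<longlonglongrightarrow> I \<omega>" if "\<omega> \<in> space M" for \<omega>
    using riemann_sum_tendsto[OF ab, of "\<lambda>t. Y t \<omega>"] cont that
    unfolding S_def h_def x_def I_def by simp
  have Im: "I \<in> borel_measurable M" by (rule borel_measurable_LIMSEQ_real[OF lim Sm])
  have SG: "(S n \<omega>)^2 \<le> G n \<omega>" for n \<omega>
  proof -
    have "(S n \<omega>)^2 = (h n)^2 * (\<Sum>k<Suc n. Y (x n k) \<omega>)^2" by (simp add: S_def power_mult_distrib)
    also have "\<dots> \<le> (h n)^2 * ((\<Sum>k<Suc n. (Y (x n k) \<omega>)^2) * card {..<Suc n})"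
      by (intro mult_left_mono sum_squared_le_sum_of_squares) simp
    finally show ?thesis by (simp add: G_def mult_ac)
  qed
  have Yint: "integrable M (\<lambda>\<omega>. (Y (x n k) \<omega>)^2)" if "k < Suc n" for n k
    using mom xin[OF that] by blast
  have Gint: "integrable M (G n)" for n
  proof -
    have "integrable M (\<lambda>\<omega>. \<Sum>k<Suc n. (Y (x n k) \<omega>)^2)" by (rule Bochner_Integration.integrable_sum) (simp add: Yint)
    then show ?thesis unfolding G_def by simp
  qed
  have GE: "integral\<^sup>L M (G n) \<le> (b-a)^2 * K" for n
  proof -
    have "integral\<^sup>L M (G n) = (h n)^2 * real (Suc n) * (\<Sum>k<Suc n. integral\<^sup>L M (\<lambda>\<omega>. (Y (x n k) \<omega>)^2))"
      unfolding G_def using mom xin by (subst integral_mult_right_zero, subst Bochner_Integration.integral_sum) auto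
    also have "\<dots> \<le> (h n)^2 * real (Suc n) * (\<Sum>k<Suc n. K)"
      using mom xin by (intro mult_left_mono sum_mono) auto
    also have "\<dots> = ((b-a)/real (Suc n))^2 * (real (Suc n))^2 * K" by (simp add: h_def power2_eq_square)
    also have "\<dots> = (b-a)^2 * K" by (simp add: power_divide)
    finally show ?thesis .
  qed
  have G0: "G n \<omega> \<ge> 0" for n \<omega> unfolding G_def by (intro mult_nonneg_nonneg sum_nonneg) auto
  have SN: "(\<integral>\<^sup>+\<omega>. ennreal ((S n \<omega>)^2) \<partial>M) \<le> ennreal ((b-a)^2 * K)" for n
  proof -
    have "(\<integral>\<^sup>+\<omega>. ennreal ((S n \<omega>)^2) \<partial>M) \<le> (\<integral>\<^sup>+\<omega>. ennreal (G n \<omega>) \<partial>M)"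
      by (intro nn_integral_mono ennreal_leI SG)
    also have "\<dots> = ennreal (integral\<^sup>L M (G n))"
      by (rule nn_integral_eq_integral[OF Gint]) (simp add: G0)
    also have "\<dots> \<le> ennreal ((b-a)^2 * K)" by (intro ennreal_leI GE)
    finally show ?thesis .
  qed
  have liminf_eq: "liminf (\<lambda>n. ennreal ((S n \<omega>)^2)) = ennreal ((I \<omega>)^2)" if "\<omega> \<in> space M" for \<omega>
    by (intro lim_imp_Liminf tendsto_ennrealI tendsto_power lim[OF that]) simp
  have "(\<integral>\<^sup>+\<omega>. ennreal ((I \<omega>)^2) \<partial>M) = (\<integral>\<^sup>+\<omega>. liminf (\<lambda>n. ennreal ((S n \<omega>)^2)) \<partial>M)"
    by (intro nn_integral_cong) (simp add: liminf_eq)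
  also have "\<dots> \<le> liminf (\<lambda>n. \<integral>\<^sup>+\<omega>. ennreal ((S n \<omega>)^2) \<partial>M)"
    by (rule nn_integral_liminf) (use Sm in measurable)
  also have "\<dots> \<le> ennreal ((b-a)^2 * K)"
  proof -
    have "liminf (\<lambda>n. \<integral>\<^sup>+\<omega>. ennreal ((S n \<omega>)^2) \<partial>M) \<le> limsup (\<lambda>n. \<integral>\<^sup>+\<omega>. ennreal ((S n \<omega>)^2) \<partial>M)"
      by (rule Liminf_le_Limsup) simp
    also have "\<dots> \<le> ennreal ((b-a)^2 * K)" by (rule Limsup_bounded) (simp add: SN)
    finally show ?thesis .
  qed
  finally have NN: "(\<integral>\<^sup>+\<omega>. ennreal ((I \<omega>)^2) \<partial>M) \<le> ennreal ((b-a)^2 * K)" .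
  have I2m: "(\<lambda>\<omega>. (I \<omega>)^2) \<in> borel_measurable M" using Im by measurable
  have int: "integrable M (\<lambda>\<omega>. (I \<omega>)^2)"
    by (rule integrableI_nonneg[OF I2m]) (use NN in \<open>auto simp: top_unique less_top[symmetric] dest: order.strict_trans1\<close>)
  have "integral\<^sup>L M (\<lambda>\<omega>. (I \<omega>)^2) = enn2real (\<integral>\<^sup>+\<omega>. ennreal ((I \<omega>)^2) \<partial>M)"
    by (rule integral_eq_nn_integral[OF I2m]) simp
  also have "\<dots> \<le> (b-a)^2 * K" by (rule enn2real_leI) (use K0 NN in auto)
  finally show ?thesis using Im int unfolding I_def by simp
qed



lemma ou_pathwise:
  fixes x b :: "real \<Rightarrow> real"
  assumes mu: "\<mu> > 0"
    and cx: "continuous_on {0..T} x" and cb: "continuous_on {0..T} b"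
    and eq: "\<forall>t\<in>{0..T}. x t = x0 - \<mu> * integral {0..t} x + \<theta> * b t"
    and t: "t \<in> {0..T}"
  shows "x t = x0 * exp (-\<mu> * t) + \<theta> * b t - \<theta> * \<mu> * integral {0..t} (\<lambda>u. exp (-\<mu> * (t-u)) * b u)"
proof -
  define y where "y s = integral {0..s} x" for s
  define g where "g u = exp (\<mu> * u) * b u" for u
  define z where "z s = integral {0..s} g" for s
  define F where "F s = exp (\<mu> * s) * y s - x0 * (exp (\<mu> * s) - 1) / \<mu> - \<theta> * z s" for s
  have cg: "continuous_on {0..T} g" unfolding g_def using cb by (intro continuous_intros)
  have dF: "(F has_field_derivative 0) (at s within {0..T})" if s: "s \<in> {0..T}" for s
  proof -
    have dy: "(y has_real_derivative x s) (at s within {0..T})"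
      unfolding y_def by (rule integral_has_real_derivative[OF cx s])
    have dz: "(z has_real_derivative g s) (at s within {0..T})"
      unfolding z_def by (rule integral_has_real_derivative[OF cg s])
    have de: "((\<lambda>s. exp (\<mu> * s)) has_real_derivative exp (\<mu> * s) * \<mu>) (at s within {0..T})"
      by (rule DERIV_chain'[where f="\<lambda>s. \<mu> * s" and g=exp, OF DERIV_cmult[OF DERIV_ident], simplified]) simp
    have "(F has_field_derivative
        (exp (\<mu> * s) * x s + exp (\<mu> * s) * \<mu> * y s - x0 * (exp (\<mu> * s) * \<mu> - 0) / \<mu> - \<theta> * g s)) (at s within {0..T})"
      unfolding F_def
      by (intro DERIV_diff DERIV_mult' de dy DERIV_cdivide DERIV_cmult dz DERIV_const)
    moreover have "exp (\<mu> * s) * x s + exp (\<mu> * s) * \<mu> * y s - x0 * (exp (\<mu> * s) * \<mu> - 0) / \<mu> - \<theta> * g s = 0"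
    proof -
      have hx: "x s = x0 - \<mu> * y s + \<theta> * b s" unfolding y_def by (rule bspec[OF eq s])
      have "exp (\<mu> * s) * x s + exp (\<mu> * s) * \<mu> * y s - x0 * (exp (\<mu> * s) * \<mu> - 0) / \<mu> - \<theta> * g s
          = exp (\<mu> * s) * (x s + \<mu> * y s - x0 - \<theta> * b s)"
      proof -
        have q: "x0 * (exp (\<mu> * s) * \<mu> - 0) / \<mu> = x0 * exp (\<mu> * s)" using mu by simp
        show ?thesis unfolding q g_def by algebra
      qed
      also have "x s + \<mu> * y s - x0 - \<theta> * b s = 0" using hx by simp
      finally show ?thesis by simp
    qed
    ultimately show ?thesis by simp
  qed
  obtain c where c: "\<forall>s\<in>{0..T}. F s = c"
    using has_field_derivative_zero_constant[of "{0..T}" F] dF by auto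
  have T0: "0 \<in> {0..T}" using t by auto
  have "F 0 = 0" unfolding F_def y_def z_def by simp
  then have Ft: "F t = 0" using c T0 t by metis
  have E: "exp (\<mu> * t) > 0" by simp
  have yt: "y t = exp (-\<mu> * t) * (x0 * (exp (\<mu> * t) - 1) / \<mu> + \<theta> * z t)"
    using Ft E unfolding F_def by (simp add: exp_minus field_simps)
  have zt: "exp (-\<mu> * t) * z t = integral {0..t} (\<lambda>u. exp (-\<mu> * (t-u)) * b u)"
  proof -
    have "exp (-\<mu> * t) * z t = integral {0..t} (\<lambda>u. exp (-\<mu> * t) * g u)"
      unfolding z_def by simp
    also have "\<dots> = integral {0..t} (\<lambda>u. exp (-\<mu> * (t-u)) * b u)"
      unfolding g_def
    proof (rule integral_cong)
      fix u
      have "-\<mu> * (t-u) = -\<mu> * t + \<mu> * u" by (simp add: algebra_simps)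
      then have "exp (-\<mu> * (t-u)) = exp (-\<mu> * t) * exp (\<mu> * u)" by (simp only: exp_add)
      then show "exp (-\<mu> * t) * (exp (\<mu> * u) * b u) = exp (-\<mu> * (t-u)) * b u" by simp
    qed
    finally show ?thesis .
  qed
  have "x t = x0 - \<mu> * y t + \<theta> * b t" unfolding y_def by (rule bspec[OF eq t])
  also have "\<dots> = x0 * exp (-\<mu> * t) + \<theta> * b t - \<theta> * \<mu> * (exp (-\<mu> * t) * z t)"
    unfolding yt using mu E by (simp add: exp_minus field_simps)
  finally show ?thesis unfolding zt .
qed



lemma sq3_bound: "((p::real) + q - r)^2 \<le> 2*p^2 + 4*q^2 + 4*r^2"
proof -
  have "0 \<le> (p - q + r)^2" "0 \<le> (q + r)^2" by simp_all
  then show ?thesis by (simp add: power2_eq_square algebra_simps)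
qed

lemma young_up:
  fixes D R a :: real assumes a: "a > 0"
  shows "(D - R)^2 \<le> (1 + a) * D^2 + (1 + 1/a) * R^2"
proof -
  have "0 \<le> (a*D + R)^2 / a" using a by simp
  also have "(a*D + R)^2 / a = a * D^2 + 2*(D*R) + R^2/a" using a by (simp add: power2_eq_square field_simps)
  finally have "- 2*(D*R) \<le> a * D^2 + R^2/a" by simp
  moreover have "(D - R)^2 = D^2 - 2*(D*R) + R^2" by (simp add: power2_eq_square algebra_simps)
  moreover have "(1 + a) * D^2 + (1 + 1/a) * R^2 = D^2 + R^2 + (a * D^2 + R^2/a)" by (simp add: algebra_simps)
  ultimately show ?thesis by linarith
qed

lemma young_lo:
  fixes D R a :: real assumes a: "a > 0"
  shows "(1 - a) * D^2 - R^2 / a \<le> (D - R)^2"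
proof -
  have "0 \<le> (a*D - R)^2 / a" using a by simp
  also have "(a*D - R)^2 / a = a * D^2 - 2*(D*R) + R^2/a" using a by (simp add: power2_eq_square field_simps)
  finally have "2*(D*R) \<le> a * D^2 + R^2/a" by simp
  moreover have "(D - R)^2 = D^2 - 2*(D*R) + R^2" by (simp add: power2_eq_square algebra_simps)
  moreover have "(1 - a) * D^2 - R^2 / a = D^2 - (a * D^2 + R^2/a)" by (simp add: algebra_simps)
  moreover have "R^2 \<ge> 0" by simp
  ultimately show ?thesis by linarith
qed

lemma sqrt_minus_one: assumes "(r::real) \<ge> 0" shows "\<bar>sqrt r - 1\<bar> \<le> \<bar>r - 1\<bar>"
proof -
  have s: "sqrt r \<ge> 0" using assms by simp
  have "r - 1 = (sqrt r - 1) * (sqrt r + 1)" using assms by (simp add: algebra_simps power2_eq_square[symmetric])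
  then have "\<bar>r - 1\<bar> = \<bar>sqrt r - 1\<bar> * (sqrt r + 1)" using s by (simp add: abs_mult)
  moreover have "\<bar>sqrt r - 1\<bar> \<le> \<bar>sqrt r - 1\<bar> * (sqrt r + 1)" using s
    by (simp add: mult_le_cancel_left1)
  ultimately show ?thesis by simp
qed

lemma diff_moment:
  fixes D R :: "'a \<Rightarrow> real"
  assumes Dm: "D \<in> borel_measurable M" and Rm: "R \<in> borel_measurable M"
    and Di: "integrable M (\<lambda>\<omega>. (D \<omega>)^2)" and Ri: "integrable M (\<lambda>\<omega>. (R \<omega>)^2)" and a: "a > 0"
  shows "integrable M (\<lambda>\<omega>. (D \<omega> - R \<omega>)^2) \<and>
    integral\<^sup>L M (\<lambda>\<omega>. (D \<omega> - R \<omega>)^2) \<le> (1 + a) * integral\<^sup>L M (\<lambda>\<omega>. (D \<omega>)^2) + (1 + 1/a) * integral\<^sup>L M (\<lambda>\<omega>. (R \<omega>)^2) \<and>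
    (1 - a) * integral\<^sup>L M (\<lambda>\<omega>. (D \<omega>)^2) - integral\<^sup>L M (\<lambda>\<omega>. (R \<omega>)^2) / a \<le> integral\<^sup>L M (\<lambda>\<omega>. (D \<omega> - R \<omega>)^2)"
proof (intro conjI)
  have ui: "integrable M (\<lambda>\<omega>. (1 + a) * (D \<omega>)^2 + (1 + 1/a) * (R \<omega>)^2)" using Di Ri by simp
  have li: "integrable M (\<lambda>\<omega>. (1 - a) * (D \<omega>)^2 - (R \<omega>)^2 / a)" using Di Ri by simp
  have m: "(\<lambda>\<omega>. (D \<omega> - R \<omega>)^2) \<in> borel_measurable M" using Dm Rm by measurable
  show I: "integrable M (\<lambda>\<omega>. (D \<omega> - R \<omega>)^2)"
    by (rule Bochner_Integration.integrable_bound[OF ui m]) (use young_up[OF a] in \<open>auto intro!: AE_I2 simp: abs_le_iff intro: order.trans[OF _ abs_ge_self]\<close>)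
  have "integral\<^sup>L M (\<lambda>\<omega>. (D \<omega> - R \<omega>)^2) \<le> integral\<^sup>L M (\<lambda>\<omega>. (1 + a) * (D \<omega>)^2 + (1 + 1/a) * (R \<omega>)^2)"
    by (rule integral_mono[OF I ui]) (rule young_up[OF a])
  also have "\<dots> = (1 + a) * integral\<^sup>L M (\<lambda>\<omega>. (D \<omega>)^2) + (1 + 1/a) * integral\<^sup>L M (\<lambda>\<omega>. (R \<omega>)^2)"
    using Di Ri by simp
  finally show "integral\<^sup>L M (\<lambda>\<omega>. (D \<omega> - R \<omega>)^2) \<le> (1 + a) * integral\<^sup>L M (\<lambda>\<omega>. (D \<omega>)^2) + (1 + 1/a) * integral\<^sup>L M (\<lambda>\<omega>. (R \<omega>)^2)" .
  have "(1 - a) * integral\<^sup>L M (\<lambda>\<omega>. (D \<omega>)^2) - integral\<^sup>L M (\<lambda>\<omega>. (R \<omega>)^2) / a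
      = integral\<^sup>L M (\<lambda>\<omega>. (1 - a) * (D \<omega>)^2 - (R \<omega>)^2 / a)"
    using Di Ri by simp
  also have "\<dots> \<le> integral\<^sup>L M (\<lambda>\<omega>. (D \<omega> - R \<omega>)^2)"
    by (rule integral_mono[OF li I]) (rule young_lo[OF a])
  finally show "(1 - a) * integral\<^sup>L M (\<lambda>\<omega>. (D \<omega>)^2) - integral\<^sup>L M (\<lambda>\<omega>. (R \<omega>)^2) / a \<le> integral\<^sup>L M (\<lambda>\<omega>. (D \<omega> - R \<omega>)^2)" .
qed


lemma powr_double: "(x::real) powr (2*a) = (x powr a)^2"
proof -
  have "x powr (2*a) = x powr (a + a)" by (simp only: mult_2)
  also have "\<dots> = x powr a * x powr a" by (rule powr_add)
  also have "\<dots> = (x powr a)^2" by (rule power2_eq_square[symmetric])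
  finally show ?thesis .
qed

theorem mainTheorem14:
  fixes M :: "'a measure" and B X :: "real \<Rightarrow> 'a \<Rightarrow> real"
    and T \<mu> \<theta> x0 H :: real
  assumes "prob_space M"
    and "T > 0" and "\<mu> > 0" and "\<theta> > 0" and "0 < H" and "H < 1"
    and "is_fBm M H T B"
    and "\<forall>t\<in>{0..T}. X t \<in> borel_measurable M"
    and "\<forall>\<omega>\<in>space M. continuous_on {0..T} (\<lambda>t. X t \<omega>) \<and>
           (\<forall>t\<in>{0..T}. X t \<omega> = x0 - \<mu> * integral {0..t} (\<lambda>s. X s \<omega>) + \<theta> * B t \<omega>)"
  shows "(\<forall>t\<in>{0..T}. integrable M (\<lambda>\<omega>. (X t \<omega>)^2) \<and>
           integral\<^sup>L M (\<lambda>\<omega>. (X t \<omega>)^2)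
             \<le> 2 * x0^2 + 4 * \<theta>^2 * exp (2 * \<mu> * T) * T powr (2*H) * (1 + \<mu>^2 * T^2))
       \<and> (\<exists>C h0. h0 > 0 \<and> (\<forall>h\<in>{0<..h0}. sigma2 M X 0 h \<le> C * h powr (2*H)))
       \<and> cond_C1 M X H
       \<and> cond_C2 M X T H \<theta>"
proof -
  note M = assms(1)
  interpret P: prob_space M by (rule M)
  have T0: "T > 0" and mu: "\<mu> > 0" and th: "\<theta> > 0" and H0: "0 < H" and H1: "H < 1"
    using assms by auto
  have fBm: "is_fBm M H T B" by (rule assms(7))
  have Bm: "\<forall>t\<in>{0..T}. B t \<in> borel_measurable M"
    using assms(7)[unfolded is_fBm_def] by (rule conjunct1)
  have Bc: "\<forall>\<omega>\<in>space M. continuous_on {0..T} (\<lambda>t. B t \<omega>)"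
    using assms(7)[unfolded is_fBm_def] by (rule conjunct1[OF conjunct2])
  have Xm: "\<forall>t\<in>{0..T}. X t \<in> borel_measurable M" by (rule assms(8))
  have Xc: "\<And>\<omega>. \<omega> \<in> space M \<Longrightarrow> continuous_on {0..T} (\<lambda>t. X t \<omega>)" using assms(9) by blast
  have Xeq: "\<And>\<omega>. \<omega> \<in> space M \<Longrightarrow> \<forall>t\<in>{0..T}. X t \<omega> = x0 - \<mu> * integral {0..t} (\<lambda>s. X s \<omega>) + \<theta> * B t \<omega>"
    using assms(9) by blast
  define Kb where "Kb = 2 * x0^2 + 4 * \<theta>^2 * exp (2 * \<mu> * T) * T powr (2*H) * (1 + \<mu>^2 * T^2)"
  have Kb0: "Kb \<ge> 0" unfolding Kb_def by (intro add_nonneg_nonneg mult_nonneg_nonneg) auto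
  define J where "J t \<omega> = integral {0..t} (\<lambda>u. exp (-\<mu> * (t-u)) * B u \<omega>)" for t \<omega>

  have Jprop: "J t \<in> borel_measurable M \<and> integrable M (\<lambda>\<omega>. (J t \<omega>)^2) \<and>
      integral\<^sup>L M (\<lambda>\<omega>. (J t \<omega>)^2) \<le> (t - 0)^2 * T powr (2*H)" if t: "t \<in> {0..T}" for t
  proof -
    have sub: "{0..t} \<subseteq> {0..T}" using t by auto
    have m: "\<forall>u\<in>{0..t}. (\<lambda>\<omega>. exp (-\<mu> * (t-u)) * B u \<omega>) \<in> borel_measurable M"
      using Bm sub by (auto intro!: borel_measurable_times)
    have c: "\<forall>\<omega>\<in>space M. continuous_on {0..t} (\<lambda>u. exp (-\<mu> * (t-u)) * B u \<omega>)"
    proof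
      fix \<omega> assume "\<omega> \<in> space M"
      then have "continuous_on {0..t} (\<lambda>u. B u \<omega>)" using Bc sub by (meson continuous_on_subset)
      then show "continuous_on {0..t} (\<lambda>u. exp (-\<mu> * (t-u)) * B u \<omega>)" by (intro continuous_intros)
    qed
    have mo: "\<forall>u\<in>{0..t}. integrable M (\<lambda>\<omega>. (exp (-\<mu> * (t-u)) * B u \<omega>)^2) \<and>
        integral\<^sup>L M (\<lambda>\<omega>. (exp (-\<mu> * (t-u)) * B u \<omega>)^2) \<le> T powr (2*H)"
    proof
      fix u assume u: "u \<in> {0..t}"
      then have uT: "u \<in> {0..T}" using sub by auto
      have bm: "integrable M (\<lambda>\<omega>. (B u \<omega>)^2) \<and> integral\<^sup>L M (\<lambda>\<omega>. (B u \<omega>)^2) = u powr (2*H)"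
        by (rule fBm_moment[OF M fBm uT H0])
      have eq: "(\<lambda>\<omega>. (exp (-\<mu> * (t-u)) * B u \<omega>)^2) = (\<lambda>\<omega>. (exp (-\<mu> * (t-u)))^2 * (B u \<omega>)^2)"
        by (simp add: power_mult_distrib)
      have e1: "(exp (-\<mu> * (t-u)))^2 \<le> 1"
      proof -
        have "exp (-\<mu> * (t-u)) \<le> 1" using u mu by (simp add: mult_nonneg_nonneg)
        moreover have "exp (-\<mu> * (t-u)) \<ge> 0" by simp
        ultimately show ?thesis by (simp add: power_le_one)
      qed
      have p1: "u powr (2*H) \<le> T powr (2*H)" using u uT H0 by (intro powr_mono2) auto
      have "(exp (-\<mu> * (t-u)))^2 * u powr (2*H) \<le> 1 * T powr (2*H)"
        by (rule mult_mono[OF e1 p1]) auto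
      then show "integrable M (\<lambda>\<omega>. (exp (-\<mu> * (t-u)) * B u \<omega>)^2) \<and>
        integral\<^sup>L M (\<lambda>\<omega>. (exp (-\<mu> * (t-u)) * B u \<omega>)^2) \<le> T powr (2*H)"
        unfolding eq using bm by simp
    qed
    have t0: "0 \<le> t" using t by simp
    from process_integral_moment[OF M t0 m c mo] show ?thesis unfolding J_def by simp
  qed

  have Xsol: "X t \<omega> = x0 * exp (-\<mu> * t) + \<theta> * B t \<omega> - \<theta> * \<mu> * J t \<omega>"
    if w: "\<omega> \<in> space M" and t: "t \<in> {0..T}" for \<omega> t
    unfolding J_def by (rule ou_pathwise[OF mu Xc[OF w] bspec[OF Bc w] Xeq[OF w] t])

  have partA: "integrable M (\<lambda>\<omega>. (X t \<omega>)^2) \<and> integral\<^sup>L M (\<lambda>\<omega>. (X t \<omega>)^2) \<le> Kb"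
    if t: "t \<in> {0..T}" for t
  proof -
    define G where "G \<omega> = 2 * x0^2 + 4 * \<theta>^2 * (B t \<omega>)^2 + 4 * (\<theta> * \<mu>)^2 * (J t \<omega>)^2" for \<omega>
    have bm: "integrable M (\<lambda>\<omega>. (B t \<omega>)^2) \<and> integral\<^sup>L M (\<lambda>\<omega>. (B t \<omega>)^2) = t powr (2*H)"
      by (rule fBm_moment[OF M fBm t H0])
    have jm: "J t \<in> borel_measurable M \<and> integrable M (\<lambda>\<omega>. (J t \<omega>)^2) \<and>
      integral\<^sup>L M (\<lambda>\<omega>. (J t \<omega>)^2) \<le> (t - 0)^2 * T powr (2*H)" by (rule Jprop[OF t])
    have Gi: "integrable M G" unfolding G_def using bm jm by simp
    have XG: "(X t \<omega>)^2 \<le> G \<omega>" if w: "\<omega> \<in> space M" for \<omega>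
    proof -
      have "(X t \<omega>)^2 \<le> 2 * (x0 * exp (-\<mu> * t))^2 + 4 * (\<theta> * B t \<omega>)^2 + 4 * (\<theta> * \<mu> * J t \<omega>)^2"
        unfolding Xsol[OF w t] by (rule sq3_bound)
      moreover have "(x0 * exp (-\<mu> * t))^2 \<le> x0^2"
      proof -
        have "exp (-\<mu> * t) \<le> 1" using t mu by simp
        then have "(exp (-\<mu> * t))^2 \<le> 1" by (simp add: power_le_one)
        then have "x0^2 * (exp (-\<mu> * t))^2 \<le> x0^2 * 1" by (intro mult_left_mono) auto
        then show ?thesis by (simp add: power_mult_distrib)
      qed
      ultimately show ?thesis unfolding G_def by (simp add: power_mult_distrib)
    qed
    have X2m: "(\<lambda>\<omega>. (X t \<omega>)^2) \<in> borel_measurable M"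
    proof -
      have "X t \<in> borel_measurable M" using Xm t by blast
      then show ?thesis by measurable
    qed
    have Xi: "integrable M (\<lambda>\<omega>. (X t \<omega>)^2)"
      by (rule Bochner_Integration.integrable_bound[OF Gi X2m]) (use XG in \<open>auto intro!: AE_I2 simp: abs_le_iff intro: order.trans[OF _ abs_ge_self]\<close>)
    have "integral\<^sup>L M (\<lambda>\<omega>. (X t \<omega>)^2) \<le> integral\<^sup>L M G"
      by (rule integral_mono[OF Xi Gi]) (rule XG)
    also have "integral\<^sup>L M G = 2 * x0^2 + 4 * \<theta>^2 * t powr (2*H) + 4 * (\<theta> * \<mu>)^2 * integral\<^sup>L M (\<lambda>\<omega>. (J t \<omega>)^2)"
      unfolding G_def using bm jm by (simp add: P.prob_space)
    also have "\<dots> \<le> 2 * x0^2 + 4 * \<theta>^2 * T powr (2*H) + 4 * (\<theta> * \<mu>)^2 * (t^2 * T powr (2*H))"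
    proof -
      have "t powr (2*H) \<le> T powr (2*H)" using t H0 by (intro powr_mono2) auto
      moreover have "integral\<^sup>L M (\<lambda>\<omega>. (J t \<omega>)^2) \<le> t^2 * T powr (2*H)" using jm by simp
      ultimately show ?thesis by (intro add_mono mult_left_mono) auto
    qed
    also have "\<dots> \<le> Kb"
    proof -
      define P0 where "P0 = \<theta>^2 * T powr (2*H)"
      have P00: "P0 \<ge> 0" unfolding P0_def by simp
      have tT: "t^2 \<le> T^2" using t by (intro power_mono) auto
      have e1: "exp (2 * \<mu> * T) \<ge> 1" using mu T0 by simp
      have "1 + \<mu>^2 * t^2 \<le> 1 + \<mu>^2 * T^2" using tT by (simp add: mult_left_mono)
      also have "\<dots> \<le> exp (2 * \<mu> * T) * (1 + \<mu>^2 * T^2)"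
      proof -
        have "0 \<le> 1 + \<mu>^2 * T^2" by (intro add_nonneg_nonneg) auto
        from mult_right_mono[OF e1 this] show ?thesis by simp
      qed
      finally have "P0 * (1 + \<mu>^2 * t^2) \<le> P0 * (exp (2 * \<mu> * T) * (1 + \<mu>^2 * T^2))"
        using P00 by (rule mult_left_mono)
      then show ?thesis unfolding Kb_def P0_def by (simp add: algebra_simps power_mult_distrib)
    qed
    finally show ?thesis using Xi by simp
  qed
  have incr: "sigma2 M X t (t+h) \<le> (1+a) * (\<theta>^2 * h powr (2*H)) + (1 + 1/a) * (\<mu>^2 * h^2 * Kb) \<and>
      (1-a) * (\<theta>^2 * h powr (2*H)) - (\<mu>^2 * h^2 * Kb) / a \<le> sigma2 M X t (t+h)"
    if t0: "0 \<le> t" and h0: "0 < h" and tT: "t + h \<le> T" and a: "a > 0" for t h a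
  proof -
    define D where "D \<omega> = \<theta> * (B (t+h) \<omega> - B t \<omega>)" for \<omega>
    define R where "R \<omega> = \<mu> * integral {t..t+h} (\<lambda>s. X s \<omega>)" for \<omega>
    have tin: "t \<in> {0..T}" and thin: "t + h \<in> {0..T}" using t0 h0 tT by auto
    have sub: "{t..t+h} \<subseteq> {0..T}" using t0 tT by auto
    have bi: "integrable M (\<lambda>\<omega>. (B (t+h) \<omega> - B t \<omega>)^2) \<and>
        integral\<^sup>L M (\<lambda>\<omega>. (B (t+h) \<omega> - B t \<omega>)^2) = \<bar>t + h - t\<bar> powr (2*H)"
      by (rule fBm_incr_moment[OF M fBm thin tin H0])
    have Dm: "D \<in> borel_measurable M"
    proof -
      have "B t \<in> borel_measurable M" "B (t+h) \<in> borel_measurable M" using Bm tin thin by blast+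
      then show ?thesis unfolding D_def by measurable
    qed
    have Di: "integrable M (\<lambda>\<omega>. (D \<omega>)^2)" unfolding D_def using bi by (simp add: power_mult_distrib)
    have DE: "integral\<^sup>L M (\<lambda>\<omega>. (D \<omega>)^2) = \<theta>^2 * h powr (2*H)"
      unfolding D_def using bi h0 by (simp add: power_mult_distrib)
    have pm: "(\<lambda>\<omega>. integral {t..t+h} (\<lambda>s. X s \<omega>)) \<in> borel_measurable M \<and>
         integrable M (\<lambda>\<omega>. (integral {t..t+h} (\<lambda>s. X s \<omega>))^2) \<and>
         integral\<^sup>L M (\<lambda>\<omega>. (integral {t..t+h} (\<lambda>s. X s \<omega>))^2) \<le> (t+h-t)^2 * Kb"
    proof (rule process_integral_moment[OF M])
      show "t \<le> t + h" using h0 by simp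
      show "\<forall>s\<in>{t..t+h}. X s \<in> borel_measurable M" using Xm sub by auto
      show "\<forall>\<omega>\<in>space M. continuous_on {t..t+h} (\<lambda>s. X s \<omega>)" using Xc sub by (meson continuous_on_subset)
      show "\<forall>s\<in>{t..t+h}. integrable M (\<lambda>\<omega>. (X s \<omega>)^2) \<and> integral\<^sup>L M (\<lambda>\<omega>. (X s \<omega>)^2) \<le> Kb"
        using partA sub by auto
    qed
    have Rm: "R \<in> borel_measurable M"
    proof -
      have "(\<lambda>\<omega>. integral {t..t+h} (\<lambda>s. X s \<omega>)) \<in> borel_measurable M" using pm by blast
      then show ?thesis unfolding R_def by measurable
    qed
    have Ri: "integrable M (\<lambda>\<omega>. (R \<omega>)^2)" unfolding R_def using pm by (simp add: power_mult_distrib)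
    have RE: "integral\<^sup>L M (\<lambda>\<omega>. (R \<omega>)^2) \<le> \<mu>^2 * h^2 * Kb"
    proof -
      have "integral\<^sup>L M (\<lambda>\<omega>. (R \<omega>)^2) = \<mu>^2 * integral\<^sup>L M (\<lambda>\<omega>. (integral {t..t+h} (\<lambda>s. X s \<omega>))^2)"
        unfolding R_def by (simp add: power_mult_distrib)
      also have "\<dots> \<le> \<mu>^2 * (h^2 * Kb)" using pm by (intro mult_left_mono) auto
      finally show ?thesis by simp
    qed
    have diff: "X (t+h) \<omega> - X t \<omega> = D \<omega> - R \<omega>" if w: "\<omega> \<in> space M" for \<omega>
    proof -
      have ct: "continuous_on {0..t+h} (\<lambda>s. X s \<omega>)" by (rule continuous_on_subset[OF Xc[OF w]]) (use tT in auto)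
      have comb: "integral {0..t} (\<lambda>s. X s \<omega>) + integral {t..t+h} (\<lambda>s. X s \<omega>) = integral {0..t+h} (\<lambda>s. X s \<omega>)"
        by (rule Henstock_Kurzweil_Integration.integral_combine) (use t0 h0 ct in \<open>auto intro: integrable_continuous_interval\<close>)
      have e1: "X (t+h) \<omega> = x0 - \<mu> * integral {0..t+h} (\<lambda>s. X s \<omega>) + \<theta> * B (t+h) \<omega>"
        using Xeq[OF w] thin by blast
      have e2: "X t \<omega> = x0 - \<mu> * integral {0..t} (\<lambda>s. X s \<omega>) + \<theta> * B t \<omega>"
        using Xeq[OF w] tin by blast
      show ?thesis unfolding e1 e2 D_def R_def comb[symmetric] by (simp add: algebra_simps)
    qed
    have s2: "sigma2 M X t (t+h) = integral\<^sup>L M (\<lambda>\<omega>. (D \<omega> - R \<omega>)^2)"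
      unfolding sigma2_def by (rule Bochner_Integration.integral_cong) (simp_all add: diff)
    note dm = diff_moment[OF Dm Rm Di Ri a]
    have "sigma2 M X t (t+h) \<le> (1+a) * (\<theta>^2 * h powr (2*H)) + (1 + 1/a) * (\<mu>^2 * h^2 * Kb)"
    proof -
      have "sigma2 M X t (t+h) \<le> (1 + a) * integral\<^sup>L M (\<lambda>\<omega>. (D \<omega>)^2) + (1 + 1/a) * integral\<^sup>L M (\<lambda>\<omega>. (R \<omega>)^2)"
        using dm s2 by simp
      also have "\<dots> \<le> (1+a) * (\<theta>^2 * h powr (2*H)) + (1 + 1/a) * (\<mu>^2 * h^2 * Kb)"
        using DE RE a by (simp add: mult_left_mono)
      finally show ?thesis .
    qed
    moreover have "(1-a) * (\<theta>^2 * h powr (2*H)) - (\<mu>^2 * h^2 * Kb) / a \<le> sigma2 M X t (t+h)"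
    proof -
      have "(1-a) * (\<theta>^2 * h powr (2*H)) - (\<mu>^2 * h^2 * Kb) / a
          \<le> (1 - a) * integral\<^sup>L M (\<lambda>\<omega>. (D \<omega>)^2) - integral\<^sup>L M (\<lambda>\<omega>. (R \<omega>)^2) / a"
        using DE RE a by (simp add: divide_right_mono)
      also have "\<dots> \<le> sigma2 M X t (t+h)" using dm s2 by simp
      finally show ?thesis .
    qed
    ultimately show ?thesis by simp
  qed
  define c where "c = \<mu>^2 * Kb / \<theta>^2"
  have c0: "c \<ge> 0" unfolding c_def using Kb0 by simp
  have ratio: "\<bar>sigma2 M X t (t+h) - \<theta>^2 * h powr (2*H)\<bar> \<le> (1 + 2*c) * h powr (1-H) * (\<theta>^2 * h powr (2*H))"
    if t0: "0 \<le> t" and h0: "0 < h" and h1: "h \<le> 1" and tT: "t + h \<le> T" for t h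
  proof -
    define a where "a = h powr (1-H)"
    define w where "w = h powr H"
    define Q where "Q = \<theta>^2 * h powr (2*H)"
    define S where "S = sigma2 M X t (t+h)"
    have a0: "a > 0" using h0 by (simp add: a_def)
    have a1: "a \<le> 1"
    proof -
      have "h powr (1-H) \<le> 1 powr (1-H)" using h0 h1 H1 by (intro powr_mono2) auto
      then show ?thesis by (simp add: a_def)
    qed
    have w0: "w > 0" using h0 by (simp add: w_def)
    have hw: "h = a * w"
    proof -
      have "a * w = h powr ((1-H) + H)" unfolding a_def w_def by (rule powr_add[symmetric])
      then show ?thesis using h0 by simp
    qed
    have Qw: "Q = \<theta>^2 * w^2"
    proof -
      show ?thesis unfolding Q_def w_def by (simp add: powr_double)
    qed
    have Q0: "Q > 0" using th w0 by (simp add: Qw)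
    have r: "\<mu>^2 * h^2 * Kb = c * Q * a^2"
      unfolding c_def Qw hw using th by (simp add: field_simps power_mult_distrib)
    have I: "S \<le> (1+a) * Q + (1 + 1/a) * (c * Q * a^2)" and
         L: "(1-a) * Q - (c * Q * a^2) / a \<le> S"
      using incr[OF t0 h0 tT a0] unfolding S_def Q_def[symmetric] r by auto
    have e1: "(1 + 1/a) * (c * Q * a^2) = c * Q * a^2 + c * Q * a" using a0 by (simp add: field_simps power2_eq_square)
    have e2: "(c * Q * a^2) / a = c * Q * a" using a0 by (simp add: power2_eq_square)
    have e3: "c * Q * a^2 \<le> c * Q * a"
    proof -
      have "a^2 \<le> a" using a0 a1 by (simp add: power2_eq_square mult_le_cancel_left1)
      then show ?thesis using c0 Q0 by (intro mult_left_mono) auto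
    qed
    have e4: "c * Q * a \<ge> 0" using c0 Q0 a0 by simp
    have up: "S \<le> Q + (1 + 2*c) * a * Q"
    proof -
      have "S \<le> (1+a) * Q + (1 + 1/a) * (c * Q * a^2)" by (rule I)
      also have "\<dots> = Q + a * Q + c * Q * a^2 + c * Q * a" unfolding e1 by (simp add: algebra_simps)
      also have "\<dots> \<le> Q + a * Q + c * Q * a + c * Q * a" using e3 by (rule add_right_mono[OF add_left_mono])
      also have "\<dots> = Q + (1 + 2*c) * a * Q" by (simp add: algebra_simps)
      finally show ?thesis .
    qed
    have lo: "Q - (1 + 2*c) * a * Q \<le> S"
    proof -
      have "Q - (1 + 2*c) * a * Q \<le> Q - a * Q - c * Q * a" using e4 by (simp add: algebra_simps)
      also have "\<dots> = (1-a) * Q - (c * Q * a^2) / a" unfolding e2 by (simp add: algebra_simps)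
      also have "\<dots> \<le> S" by (rule L)
      finally show ?thesis .
    qed
    define Z where "Z = (1 + 2*c) * a * Q"
    have "\<bar>S - Q\<bar> \<le> (1 + 2*c) * a * Q"
      using up lo unfolding Z_def[symmetric] by (simp add: abs_le_iff)
    then show ?thesis unfolding S_def Q_def a_def .
  qed
  have ale1: "h powr (1-H) \<le> 1" if "0 < h" "h \<le> 1" for h
  proof -
    have "h powr (1-H) \<le> 1 powr (1-H)" using that H1 by (intro powr_mono2) auto
    then show ?thesis by simp
  qed
  have s2nn: "sigma2 M X s t \<ge> 0" for s t unfolding sigma2_def by (rule Bochner_Integration.integral_nonneg) simp
  define h0 where "h0 = min 1 T"
  define Cc where "Cc = (2 + 2*c) * \<theta>^2"
  have h00: "h0 > 0" using T0 by (simp add: h0_def)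
  have partB: "sigma2 M X 0 h \<le> Cc * h powr (2*H)" if h: "0 < h" "h \<le> h0" for h
  proof -
    have h1: "h \<le> 1" "0 + h \<le> T" using h by (auto simp: h0_def)
    have R: "\<bar>sigma2 M X 0 (0+h) - \<theta>^2 * h powr (2*H)\<bar> \<le> (1 + 2*c) * h powr (1-H) * (\<theta>^2 * h powr (2*H))"
      by (rule ratio[OF _ h(1) h1]) simp
    have "(1 + 2*c) * h powr (1-H) * (\<theta>^2 * h powr (2*H)) \<le> (1 + 2*c) * 1 * (\<theta>^2 * h powr (2*H))"
      using ale1[OF h(1) h1(1)] c0 by (intro mult_right_mono mult_left_mono) auto
    then show ?thesis using R unfolding Cc_def by (simp add: abs_le_iff algebra_simps)
  qed
  have C1: "cond_C1 M X H"
    unfolding cond_C1_def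
  proof (rule bigoI[where c = "sqrt Cc"])
    show "\<forall>\<^sub>F x in at_right 0. norm (sigmaX M X 0 x) \<le> sqrt Cc * norm (x powr H)"
      unfolding eventually_at_right_field
    proof (intro exI[of _ h0] conjI allI impI)
      show "0 < h0" by (rule h00)
      fix \<delta> :: real assume d: "0 < \<delta>" "\<delta> < h0"
      have "sigmaX M X 0 \<delta> \<le> sqrt (Cc * \<delta> powr (2*H))"
        unfolding sigmaX_def using partB[of \<delta>] d by (simp add: real_sqrt_le_mono)
      also have "\<delta> powr (2*H) = (\<delta> powr H)^2"
        by (rule powr_double)
      also have "sqrt (Cc * (\<delta> powr H)^2) = sqrt Cc * \<delta> powr H"
        by (simp add: real_sqrt_mult)
      finally show "norm (sigmaX M X 0 \<delta>) \<le> sqrt Cc * norm (\<delta> powr H)"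
        unfolding sigmaX_def using s2nn[of 0 \<delta>] by simp
    qed
  qed
  have C2: "cond_C2 M X T H \<theta>"
    unfolding cond_C2_def
  proof (intro ballI allI impI)
    fix \<phi> :: "real \<Rightarrow> real" and \<epsilon> :: real
    assume phi: "\<phi> \<in> Psi T" and e: "\<epsilon> > 0"
    have phi0: "\<And>h. h \<in> {0<..T} \<Longrightarrow> \<phi> h \<ge> 0" using phi unfolding Psi_def by blast
    define k0 where "k0 = min 1 (\<epsilon> / (1 + 2*c))"
    have pc: "1 + 2*c > 0" using c0 by simp
    have k0a: "k0 > 0" using e pc by (simp add: k0_def)
    have k0b: "k0 \<le> 1" by (simp add: k0_def)
    have k0c: "(1 + 2*c) * k0 \<le> \<epsilon>"
    proof -
      have "k0 \<le> \<epsilon> / (1 + 2*c)" by (simp add: k0_def)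
      then have "(1 + 2*c) * k0 \<le> (1 + 2*c) * (\<epsilon> / (1 + 2*c))" using pc by (intro mult_left_mono) auto
      also have "\<dots> = \<epsilon>" using pc by simp
      finally show ?thesis .
    qed
    note k0 = k0a k0b k0c
    define d0 where "d0 = min T (k0 powr (1/(1-H)))"
    have d0: "d0 > 0" using T0 k0 by (simp add: d0_def)
    have d0T: "d0 \<le> T" by (simp add: d0_def)
    have d0k: "d0 powr (1-H) \<le> k0"
    proof -
      have "d0 powr (1-H) \<le> (k0 powr (1/(1-H))) powr (1-H)" using d0 H1 by (intro powr_mono2) (auto simp: d0_def)
      also have "\<dots> = k0" using k0 H1 by (simp add: powr_powr)
      finally show ?thesis .
    qed
    have d01: "d0 \<le> 1"
    proof -
      have "k0 powr (1/(1-H)) \<le> 1 powr (1/(1-H))" using k0 H1 by (intro powr_mono2) auto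
      then show ?thesis by (simp add: d0_def)
    qed
    show "\<forall>\<^sub>F \<delta> in at_right 0. \<forall>t h. \<phi> \<delta> \<le> t \<and> t \<le> T - \<delta> \<and> 0 < h \<and> h \<le> \<delta> \<longrightarrow>
        \<bar>sigmaX M X t (t + h) / (\<theta> * h powr H) - 1\<bar> \<le> \<epsilon>"
      unfolding eventually_at_right_field
    proof (intro exI[of _ d0] conjI allI impI)
      show "0 < d0" by (rule d0)
      fix \<delta> t h :: real
      assume d: "0 < \<delta>" "\<delta> < d0" and th': "\<phi> \<delta> \<le> t \<and> t \<le> T - \<delta> \<and> 0 < h \<and> h \<le> \<delta>"
      have t0: "0 \<le> t" using phi0[of \<delta>] d d0T th' by auto
      have h0': "0 < h" and h1: "h \<le> 1" and tT: "t + h \<le> T" using th' d d01 by auto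
      have a_le: "h powr (1-H) \<le> k0"
      proof -
        have "h powr (1-H) \<le> d0 powr (1-H)" using th' d H1 by (intro powr_mono2) auto
        then show ?thesis using d0k by simp
      qed
      define Q where "Q = \<theta>^2 * h powr (2*H)"
      define S where "S = sigma2 M X t (t+h)"
      have Q0: "Q > 0" using th h0' by (simp add: Q_def)
      have R: "\<bar>S - Q\<bar> \<le> (1 + 2*c) * h powr (1-H) * Q"
        using ratio[OF t0 h0' h1 tT] unfolding S_def Q_def .
      also have "\<dots> \<le> \<epsilon> * Q"
      proof -
        have "(1 + 2*c) * h powr (1-H) \<le> (1 + 2*c) * k0" using a_le c0 by (intro mult_left_mono) auto
        then have "(1 + 2*c) * h powr (1-H) \<le> \<epsilon>" using k0(3) by linarith
        then show ?thesis using Q0 by (intro mult_right_mono) auto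
      qed
      finally have SQ: "\<bar>S / Q - 1\<bar> \<le> \<epsilon>" using Q0 by (simp add: abs_le_iff field_simps)
      have sq: "sqrt Q = \<theta> * h powr H"
      proof -
        have "Q = (\<theta> * h powr H)^2"
          unfolding Q_def by (simp add: power_mult_distrib powr_double)
        then show ?thesis using th h0' by simp
      qed
      have "sigmaX M X t (t + h) / (\<theta> * h powr H) = sqrt (S / Q)"
        unfolding sigmaX_def S_def sq[symmetric] by (simp add: real_sqrt_divide)
      moreover have "\<bar>sqrt (S / Q) - 1\<bar> \<le> \<bar>S / Q - 1\<bar>"
        by (rule sqrt_minus_one) (use Q0 s2nn in \<open>simp add: S_def\<close>)
      ultimately show "\<bar>sigmaX M X t (t + h) / (\<theta> * h powr H) - 1\<bar> \<le> \<epsilon>" using SQ by simp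
    qed
  qed
  show ?thesis
  proof (intro conjI)
    show "\<forall>t\<in>{0..T}. integrable M (\<lambda>\<omega>. (X t \<omega>)^2) \<and>
           integral\<^sup>L M (\<lambda>\<omega>. (X t \<omega>)^2)
             \<le> 2 * x0^2 + 4 * \<theta>^2 * exp (2 * \<mu> * T) * T powr (2*H) * (1 + \<mu>^2 * T^2)"
      using partA unfolding Kb_def by blast
    show "\<exists>C h0. h0 > 0 \<and> (\<forall>h\<in>{0<..h0}. sigma2 M X 0 h \<le> C * h powr (2*H))"
      using partB h00 by (intro exI[of _ Cc] exI[of _ h0]) auto
    show "cond_C1 M X H" by (rule C1)
    show "cond_C2 M X T H \<theta>" by (rule C2)
  qed
qed

end
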